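(* For every sequence $S\in[n]^m$ there exist a finite set $X\subset\mathbb Q\setminus[n]$ and an offline algorithm in the dynamic BST model with key set $[n]\cup X$ that serves $S$, keeps every element of $[n]$ a leaf of the tree at all times, and has total cost at most $3\,\mathrm{OPT}(S)$.
   Context: Dynamic BST model on a finite key set $K\subset\mathbb Q$: an algorithm chooses an initial BST on $K$. To serve access $s_t$ it touches a set of nodes forming a connected subtree containing the root and $s_t$, may rearrange the touched nodes into any BST shape (untouched subtrees reattached validly), and pays the number of touched nodes. $\mathrm{OPT}(S)$ is the minimum total cost of serving $S$ over all offline algorithms with key set $[n]$. *)

theory Defs
  imports Complex_Main "HOL-Library.Tree"
begin

fun top_closed :: "rat set \<Rightarrow> rat tree \<Rightarrow> bool" where
  "top_closed P Leaf = True"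
| "top_closed P (Node l x r) =
     (if x \<in> P then top_closed P l \<and> top_closed P r
      else set_tree (Node l x r) \<inter> P = {})"

fun hanging :: "rat set \<Rightarrow> rat tree \<Rightarrow> rat tree set" where
  "hanging P Leaf = {}"
| "hanging P (Node l x r) =
     (if x \<in> P then hanging P l \<union> hanging P r else {Node l x r})"

(* One access in the dynamic BST model: T is the current BST, s the accessed key,
   P the set of touched nodes (a connected subtree containing the root and s),
   T' the BST after rearranging the touched nodes; the untouched subtrees are
   reattached unchanged. *)
definition bst_step :: "rat tree \<Rightarrow> rat \<Rightarrow> rat set \<Rightarrow> rat tree \<Rightarrow> bool" where
  "bst_step T s P T' \<longleftrightarrow>
     bst T \<and> s \<in> P \<and> P \<subseteq> set_tree T \<and> top_closed P T \<and>
     bst T' \<and> set_tree T' = set_tree T \<and>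
     (\<forall>h \<in> hanging P T. h \<in> subtrees T')"

(* An (offline) execution serving access sequence S on key set K:
   trees Ts!0 .. Ts!m (Ts!0 the initial BST on K) and touched sets Ps!0 .. Ps!(m-1). *)
definition serves :: "rat set \<Rightarrow> rat list \<Rightarrow> rat tree list \<Rightarrow> rat set list \<Rightarrow> bool" where
  "serves K S Ts Ps \<longleftrightarrow>
     length Ts = Suc (length S) \<and> length Ps = length S \<and>
     bst (Ts ! 0) \<and> set_tree (Ts ! 0) = K \<and>
     (\<forall>i < length S. bst_step (Ts ! i) (S ! i) (Ps ! i) (Ts ! Suc i))"

definition exec_cost :: "rat set list \<Rightarrow> nat" where
  "exec_cost Ps = sum_list (map card Ps)"

definition keys_n :: "nat \<Rightarrow> rat set" where
  "keys_n n = of_nat ` {1..n}"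

definition OPT :: "nat \<Rightarrow> nat list \<Rightarrow> nat" where
  "OPT n S = (LEAST c. \<exists>Ts Ps. serves (keys_n n) (map of_nat S) Ts Ps \<and> exec_cost Ps = c)"

definition is_leaf_key :: "rat \<Rightarrow> rat tree \<Rightarrow> bool" where
  "is_leaf_key k T \<longleftrightarrow> Node Leaf k Leaf \<in> subtrees T"

end

theory Submission
  imports Defs
begin

fun emb :: "rat tree \<Rightarrow> rat tree" where
  "emb Leaf = Leaf"
| "emb (Node l k r) = Node (Node (emb l) (k - 1/3) (Node Leaf k Leaf)) (k + 1/3) (emb r)"

lemma set_emb: "set_tree (emb t) = set_tree t \<union> (\<lambda>k. k - 1/3) ` set_tree t \<union> (\<lambda>k. k + 1/3) ` set_tree t"
  by (induction t) auto

lemma int_gap: assumes "(a::rat) \<in> \<int>" "b \<in> \<int>" "a < b" shows "a + 1 \<le> b"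
proof -
  obtain i j where "a = of_int i" "b = of_int j" using assms Ints_cases by metis
  thus ?thesis using assms(3) by simp
qed

lemma int_neq:
  assumes "(a::rat) \<in> \<int>" "b \<in> \<int>"
  shows "a \<noteq> b + 1/3" "a \<noteq> b - 1/3" "a + 1/3 \<noteq> b - 1/3" "a - 1/3 \<noteq> b + 1/3"
    "a + 1/3 = b + 1/3 \<longleftrightarrow> a = b" "a - 1/3 = b - 1/3 \<longleftrightarrow> a = b"
proof -
  obtain i j where ij: "a = of_int i" "b = of_int j" using assms Ints_cases by metis
  have e: "\<And>x y::rat. x = y \<longleftrightarrow> 3*x = 3*y" by simp
  show "a \<noteq> b + 1/3"
  proof
    assume "a = b + 1/3" hence "3*a = 3*b + 1" by simp
    hence "of_int (3*i) = (of_int (3*j+1)::rat)" using ij by simp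
    hence "3*i = 3*j+1" by (simp only: of_int_eq_iff)
    thus False by presburger
  qed
  show "a \<noteq> b - 1/3"
  proof
    assume "a = b - 1/3" hence "3*a = 3*b - 1" by simp
    hence "of_int (3*i) = (of_int (3*j-1)::rat)" using ij by simp
    hence "3*i = 3*j-1" by (simp only: of_int_eq_iff)
    thus False by presburger
  qed
  show "a + 1/3 \<noteq> b - 1/3"
  proof
    assume "a + 1/3 = b - 1/3" hence "3*a + 2 = 3*b" by simp
    hence "of_int (3*i+2) = (of_int (3*j)::rat)" using ij by simp
    hence "3*i+2 = 3*j" by (simp only: of_int_eq_iff)
    thus False by presburger
  qed
  show "a - 1/3 \<noteq> b + 1/3"
  proof
    assume "a - 1/3 = b + 1/3" hence "3*a = 3*b + 2" by simp
    hence "of_int (3*i) = (of_int (3*j+2)::rat)" using ij by simp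
    hence "3*i = 3*j+2" by (simp only: of_int_eq_iff)
    thus False by presburger
  qed
  show "a + 1/3 = b + 1/3 \<longleftrightarrow> a = b" by simp
  show "a - 1/3 = b - 1/3 \<longleftrightarrow> a = b" by simp
qed

lemma bst_emb: "bst t \<Longrightarrow> set_tree t \<subseteq> \<int> \<Longrightarrow> bst (emb t)"
proof (induction t)
  case Leaf thus ?case by simp
next
  case (Node l k r)
  have k: "k \<in> \<int>" using Node.prems by auto
  have L: "\<forall>x\<in>set_tree l. x + 1 \<le> k" using Node.prems k int_gap by auto
  have R: "\<forall>x\<in>set_tree r. k + 1 \<le> x" using Node.prems k int_gap by auto
  show ?case using Node L R
    by (force simp: set_emb)
qed

lemma leaf_emb: "k \<in> set_tree t \<Longrightarrow> Node Leaf k Leaf \<in> subtrees (emb t)"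
  by (induction t) auto

lemma subtree_emb: "h \<in> subtrees t \<Longrightarrow> emb h \<in> subtrees (emb t)"
  by (induction t) auto

definition tc :: "rat set \<Rightarrow> rat \<Rightarrow> rat set" where
  "tc P s = (\<lambda>k. k - 1/3) ` P \<union> (\<lambda>k. k + 1/3) ` P \<union> {s}"

lemma tc_out:
  assumes xi: "x \<in> \<int>" and xP: "x \<notin> P" and PI: "P \<subseteq> \<int>" and sP: "s \<in> P"
  shows "x \<notin> tc P s" "x - 1/3 \<notin> tc P s" "x + 1/3 \<notin> tc P s"
proof -
  have si: "s \<in> \<int>" using assms by auto
  have a: "\<And>p. p \<in> P \<Longrightarrow> x \<noteq> p - 1/3 \<and> x \<noteq> p + 1/3 \<and> x - 1/3 \<noteq> p + 1/3 \<and> x + 1/3 \<noteq> p - 1/3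
      \<and> x - 1/3 \<noteq> p - 1/3 \<and> x + 1/3 \<noteq> p + 1/3"
  proof -
    fix p assume p: "p \<in> P"
    hence pi: "p \<in> \<int>" and "p \<noteq> x" using PI xP by auto
    thus "?thesis p" using int_neq[OF xi pi] by auto
  qed
  have b: "x \<noteq> s" "x - 1/3 \<noteq> s" "x + 1/3 \<noteq> s" using xP sP int_neq(1,2)[OF si xi] by auto
  show "x \<notin> tc P s" "x - 1/3 \<notin> tc P s" "x + 1/3 \<notin> tc P s"
    unfolding tc_def using a b by auto
qed

lemma top_closed_emb:
  "top_closed P t \<Longrightarrow> P \<subseteq> \<int> \<Longrightarrow> set_tree t \<subseteq> \<int> \<Longrightarrow> s \<in> P \<Longrightarrow> top_closed (tc P s) (emb t)"
proof (induction t)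
  case Leaf thus ?case by simp
next
  case (Node l k r)
  show ?case
  proof (cases "k \<in> P")
    case True
    thus ?thesis using Node by (auto simp: tc_def)
  next
    case False
    have dis: "set_tree (Node l k r) \<inter> P = {}" using Node.prems(1) False by simp
    have "set_tree (emb (Node l k r)) \<inter> tc P s = {}"
    proof -
      { fix x assume x1: "x \<in> set_tree (Node l k r)"
        have xi: "x \<in> \<int>" using x1 Node.prems by auto
        have "x \<notin> P" using x1 dis by auto
        note tc_out[OF xi this Node.prems(2,4)] }
      thus ?thesis unfolding set_emb[of "Node l k r"] by blast
    qed
    moreover have "k + 1/3 \<notin> tc P s" using tc_out(3)[OF _ False Node.prems(2,4)] Node.prems(3) by auto
    ultimately show ?thesis unfolding emb.simps(2) top_closed.simps(2) by simp
  qed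
qed

lemma hanging_emb:
  "P \<subseteq> \<int> \<Longrightarrow> set_tree t \<subseteq> \<int> \<Longrightarrow> s \<in> P \<Longrightarrow>
   hanging (tc P s) (emb t) \<subseteq> emb ` hanging P t \<union> {Node Leaf k Leaf | k. k \<in> set_tree t}"
proof (induction t)
  case Leaf thus ?case by simp
next
  case (Node l k r)
  show ?case
  proof (cases "k \<in> P")
    case True
    have m: "k + 1/3 \<in> tc P s" "k - 1/3 \<in> tc P s" unfolding tc_def using True by auto
    have e: "hanging (tc P s) (emb (Node l k r)) \<subseteq> hanging (tc P s) (emb l) \<union> {Node Leaf k Leaf} \<union> hanging (tc P s) (emb r)"
      unfolding emb.simps(2) hanging.simps(2) using m by (auto split: if_splits)
    have hl: "hanging (tc P s) (emb l) \<subseteq> emb ` hanging P l \<union> {Node Leaf k Leaf | k. k \<in> set_tree l}"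
      using Node.IH(1) Node.prems by auto
    have hr: "hanging (tc P s) (emb r) \<subseteq> emb ` hanging P r \<union> {Node Leaf k Leaf | k. k \<in> set_tree r}"
      using Node.IH(2) Node.prems by auto
    have H: "hanging P (Node l k r) = hanging P l \<union> hanging P r" using True by simp
    show ?thesis
    proof (rule subsetI)
      fix h assume "h \<in> hanging (tc P s) (emb (Node l k r))"
      hence "h \<in> hanging (tc P s) (emb l) \<or> h = Node Leaf k Leaf \<or> h \<in> hanging (tc P s) (emb r)"
        using e by blast
      moreover
      { assume "h \<in> hanging (tc P s) (emb l)"
        hence "h \<in> emb ` hanging P l \<or> (\<exists>k'. h = Node Leaf k' Leaf \<and> k' \<in> set_tree l)" using hl by blast
        hence "h \<in> emb ` hanging P (Node l k r) \<union> {Node Leaf k2 Leaf | k2. k2 \<in> set_tree (Node l k r)}"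
          unfolding H by auto }
      moreover
      { assume "h \<in> hanging (tc P s) (emb r)"
        hence "h \<in> emb ` hanging P r \<or> (\<exists>k'. h = Node Leaf k' Leaf \<and> k' \<in> set_tree r)" using hr by blast
        hence "h \<in> emb ` hanging P (Node l k r) \<union> {Node Leaf k2 Leaf | k2. k2 \<in> set_tree (Node l k r)}"
          unfolding H by auto }
      ultimately show "h \<in> emb ` hanging P (Node l k r) \<union> {Node Leaf k2 Leaf | k2. k2 \<in> set_tree (Node l k r)}"
        by auto
    qed
  next
    case False
    have "k + 1/3 \<notin> tc P s" using tc_out(3)[OF _ False Node.prems(1,3)] Node.prems(2) by auto
    thus ?thesis using False unfolding emb.simps(2) hanging.simps(2) by simp
  qed
qed

lemma step_emb:
  assumes st: "bst_step T s P T'" and TI: "set_tree T \<subseteq> \<int>"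
  shows "bst_step (emb T) s (tc P s) (emb T')"
proof -
  have b: "bst T" "s \<in> P" "P \<subseteq> set_tree T" "top_closed P T" "bst T'" "set_tree T' = set_tree T"
    "\<forall>h \<in> hanging P T. h \<in> subtrees T'" using st unfolding bst_step_def by auto
  have PI: "P \<subseteq> \<int>" using b TI by auto
  have T'I: "set_tree T' \<subseteq> \<int>" using b TI by auto
  have "\<forall>h \<in> hanging (tc P s) (emb T). h \<in> subtrees (emb T')"
  proof
    fix h assume "h \<in> hanging (tc P s) (emb T)"
    hence "h \<in> emb ` hanging P T \<union> {Node Leaf k Leaf | k. k \<in> set_tree T}"
      using hanging_emb[OF PI TI b(2)] by blast
    thus "h \<in> subtrees (emb T')"
      using b(6,7) subtree_emb leaf_emb by auto
  qed
  moreover have "tc P s \<subseteq> set_tree (emb T)" using b(2,3) unfolding tc_def set_emb by auto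
  ultimately show ?thesis unfolding bst_step_def
    using b bst_emb[OF b(1) TI] bst_emb[OF b(5) T'I] top_closed_emb[OF b(4) PI TI b(2)]
    by (auto simp: tc_def set_emb)
qed

lemma card_tc: assumes "finite P" "s \<in> P" shows "card (tc P s) \<le> 3 * card P"
proof -
  let ?A = "(\<lambda>k. k - 1/3) ` P" let ?B = "(\<lambda>k. k + 1/3) ` P"
  have fin: "finite (?A \<union> ?B)" using assms(1) by simp
  have e: "tc P s = insert s (?A \<union> ?B)" unfolding tc_def by blast
  have c1: "card (insert s (?A \<union> ?B)) \<le> card (?A \<union> ?B) + 1"
    using fin by (simp add: card_insert_if)
  have c2: "card (?A \<union> ?B) \<le> card ?A + card ?B" by (rule card_Un_le)
  have c3: "card ?A \<le> card P" by (rule card_image_le[OF assms(1)])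
  have c3': "card ?B \<le> card P" by (rule card_image_le[OF assms(1)])
  have c4: "card P \<ge> 1" using assms by (metis One_nat_def Suc_leI card_gt_0_iff empty_iff)
  show ?thesis unfolding e using c1 c2 c3 c3' c4 by linarith
qed

fun spine :: "nat \<Rightarrow> rat tree" where
  "spine 0 = Leaf"
| "spine (Suc k) = Node (spine k) (of_nat (Suc k)) Leaf"

lemma keys_Suc: "keys_n (Suc k) = insert (of_nat (Suc k)) (keys_n k)"
proof -
  have "{1..Suc k} = insert (Suc k) {1..k}" by auto
  thus ?thesis unfolding keys_n_def by simp
qed

lemma set_spine: "set_tree (spine k) = keys_n k"
proof (induction k)
  case 0 show ?case by (simp add: keys_n_def)
next
  case (Suc k) thus ?case using keys_Suc[of k] by auto
qed

lemma keys_lt: "x \<in> keys_n k \<Longrightarrow> x < of_nat (Suc k)"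
  unfolding keys_n_def by auto

lemma bst_spine: "bst (spine k)"
proof (induction k)
  case 0 show ?case by simp
next
  case (Suc k) thus ?case using keys_lt[of _ k] by (simp add: set_spine)
qed

lemma top_closed_all: "set_tree t \<subseteq> P \<Longrightarrow> top_closed P t"
  by (induction t) auto

lemma hanging_all: "set_tree t \<subseteq> P \<Longrightarrow> hanging P t = {}"
  by (induction t) auto

lemma exists_exec:
  assumes "set S \<subseteq> {1..n}"
  shows "\<exists>Ts Ps. serves (keys_n n) (map of_nat S) Ts Ps"
proof -
  let ?T = "spine n"
  have "serves (keys_n n) (map of_nat S) (replicate (Suc (length S)) ?T) (replicate (length S) (keys_n n))"
    unfolding serves_def
  proof (intro conjI allI impI)
    fix i assume i: "i < length (map of_nat S :: rat list)"
    hence "S ! i \<in> {1..n}" using assms nth_mem by (metis length_map subsetD)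
    hence "(of_nat (S ! i)::rat) \<in> keys_n n" unfolding keys_n_def by auto
    hence "map of_nat S ! i \<in> keys_n n" using i by simp
    moreover have "replicate (Suc (length S)) ?T ! i = ?T" "replicate (Suc (length S)) ?T ! Suc i = ?T"
      "replicate (length S) (keys_n n) ! i = keys_n n" using i by (auto simp del: replicate.simps)
    ultimately show "bst_step (replicate (Suc (length S)) ?T ! i) (map of_nat S ! i) (replicate (length S) (keys_n n) ! i)
          (replicate (Suc (length S)) ?T ! Suc i)"
      unfolding bst_step_def
      by (simp del: replicate.simps add: bst_spine set_spine top_closed_all hanging_all)
  qed (auto simp: bst_spine set_spine)
  thus ?thesis by blast
qed

theorem mainTheorem17:
  fixes n :: nat and S :: "nat list"
  assumes "set S \<subseteq> {1..n}"
  shows "\<exists>X Ts Ps. finite X \<and> X \<inter> keys_n n = {} \<and>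
           serves (keys_n n \<union> X) (map of_nat S) Ts Ps \<and>
           (\<forall>T \<in> set Ts. \<forall>k \<in> keys_n n. is_leaf_key k T) \<and>
           exec_cost Ps \<le> 3 * OPT n S"
proof -
  have "\<exists>c Ts Ps. serves (keys_n n) (map of_nat S) Ts Ps \<and> exec_cost Ps = c"
    using exists_exec[OF assms] by blast
  hence "\<exists>Ts Ps. serves (keys_n n) (map of_nat S) Ts Ps \<and> exec_cost Ps = OPT n S"
    unfolding OPT_def by (rule LeastI_ex[where P = "\<lambda>c. \<exists>Ts Ps. serves (keys_n n) (map of_nat S) Ts Ps \<and> exec_cost Ps = c"]) 
  then obtain Ts Ps where sv: "serves (keys_n n) (map of_nat S) Ts Ps" and co: "exec_cost Ps = OPT n S"
    by blast
  let ?S = "map of_nat S :: rat list"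
  let ?m = "length S"
  have len: "length Ts = Suc ?m" "length Ps = ?m" using sv unfolding serves_def by auto
  have stp: "\<And>i. i < ?m \<Longrightarrow> bst_step (Ts ! i) (?S ! i) (Ps ! i) (Ts ! Suc i)"
    using sv unfolding serves_def by auto
  have setT: "\<And>i. i \<le> ?m \<Longrightarrow> set_tree (Ts ! i) = keys_n n"
  proof -
    fix i show "i \<le> ?m \<Longrightarrow> set_tree (Ts ! i) = keys_n n"
    proof (induction i)
      case 0 thus ?case using sv unfolding serves_def by auto
    next
      case (Suc i)
      have "bst_step (Ts ! i) (?S ! i) (Ps ! i) (Ts ! Suc i)" using stp[of i] Suc.prems by simp
      hence "set_tree (Ts ! Suc i) = set_tree (Ts ! i)" unfolding bst_step_def by blast
      thus ?case using Suc by simp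
    qed
  qed
  have KI: "keys_n n \<subseteq> \<int>" unfolding keys_n_def using Ints_of_nat by blast
  define X where "X = (\<lambda>k. k - 1/3) ` keys_n n \<union> (\<lambda>k. k + 1/3) ` keys_n n"
  define Ts' where "Ts' = map emb Ts"
  define Ps' where "Ps' = map (\<lambda>i. tc (Ps ! i) (?S ! i)) [0..<?m]"
  have fK: "finite (keys_n n)" unfolding keys_n_def by simp
  have fX: "finite X" unfolding X_def using fK by simp
  have dX: "X \<inter> keys_n n = {}"
  proof -
    have "\<And>k. k \<in> keys_n n \<Longrightarrow> k - 1/3 \<notin> keys_n n \<and> k + 1/3 \<notin> keys_n n"
    proof -
      fix k assume "k \<in> keys_n n"
      hence ki: "k \<in> \<int>" using KI by blast
      have "k - 1/3 \<notin> keys_n n"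
      proof
        assume "k - 1/3 \<in> keys_n n"
        hence kk: "k - 1/3 \<in> \<int>" using KI by blast
        show False using int_neq(2)[OF kk ki] by simp
      qed
      moreover have "k + 1/3 \<notin> keys_n n"
      proof
        assume "k + 1/3 \<in> keys_n n"
        hence kk: "k + 1/3 \<in> \<int>" using KI by blast
        show False using int_neq(1)[OF kk ki] by simp
      qed
      ultimately show "k - 1/3 \<notin> keys_n n \<and> k + 1/3 \<notin> keys_n n" by blast
    qed
    thus ?thesis unfolding X_def by blast
  qed
  have sv': "serves (keys_n n \<union> X) ?S Ts' Ps'"
    unfolding serves_def
  proof (intro conjI allI impI)
    show "length Ts' = Suc (length ?S)" "length Ps' = length ?S" using len by (auto simp: Ts'_def Ps'_def)
    have T0: "Ts' ! 0 = emb (Ts ! 0)" using len by (simp add: Ts'_def)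
    have "bst (Ts ! 0)" using sv unfolding serves_def by simp
    moreover have "set_tree (Ts ! 0) \<subseteq> \<int>" using setT[of 0] KI by simp
    ultimately show "bst (Ts' ! 0)" using T0 bst_emb by simp
    show "set_tree (Ts' ! 0) = keys_n n \<union> X" using T0 setT[of 0] by (simp add: set_emb X_def Un_assoc)
    fix i assume i: "i < length ?S"
    hence "bst_step (emb (Ts ! i)) (?S ! i) (tc (Ps ! i) (?S ! i)) (emb (Ts ! Suc i))"
      using step_emb[OF stp] setT[of i] KI by auto
    thus "bst_step (Ts' ! i) (?S ! i) (Ps' ! i) (Ts' ! Suc i)"
      using i len by (simp add: Ts'_def Ps'_def)
  qed
  have lf: "\<forall>T \<in> set Ts'. \<forall>k \<in> keys_n n. is_leaf_key k T"
  proof (intro ballI)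
    fix T k assume "T \<in> set Ts'" "k \<in> keys_n n"
    then obtain i where "i < length Ts" "T = emb (Ts ! i)" unfolding Ts'_def
      by (auto simp: in_set_conv_nth)
    thus "is_leaf_key k T" using setT[of i] len `k \<in> keys_n n` leaf_emb
      unfolding is_leaf_key_def by auto
  qed
  have "exec_cost Ps' = (\<Sum>i<?m. card (tc (Ps ! i) (?S ! i)))"
    unfolding exec_cost_def Ps'_def by (simp add: sum_list_sum_nth atLeast0LessThan)
  also have "\<dots> \<le> (\<Sum>i<?m. 3 * card (Ps ! i))"
  proof (rule sum_mono)
    fix i assume "i \<in> {..<?m}"
    hence st: "bst_step (Ts ! i) (?S ! i) (Ps ! i) (Ts ! Suc i)" using stp by auto
    hence "finite (Ps ! i)" unfolding bst_step_def using finite_set_tree finite_subset by blast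
    thus "card (tc (Ps ! i) (?S ! i)) \<le> 3 * card (Ps ! i)"
      using card_tc st unfolding bst_step_def by blast
  qed
  also have "\<dots> = 3 * exec_cost Ps"
    unfolding exec_cost_def using len by (simp add: sum_list_sum_nth atLeast0LessThan sum_distrib_left)
  finally have "exec_cost Ps' \<le> 3 * OPT n S" using co by simp
  thus ?thesis using fX dX sv' lf by (intro exI[of _ X] exI[of _ Ts'] exI[of _ Ps'] conjI)
qed

end
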